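(* For every $r\ge3$ there is a bijection between the set of partitions of the highest root $\tilde\alpha_{C_r}=2\varepsilon_1$ of type $C_r$ into positive roots of $C_r$ and the set $\mathrm{JS}(\langle2\rangle,\langle2\rangle,r)$. In particular $K_{C_r}(\tilde\alpha_{C_r})=\mathsf{js}(\langle2\rangle,\langle2\rangle,r)$.
   Context: The positive roots of type $C_r$ are $\Phi^+_{C_r}=\{\varepsilon_i-\varepsilon_j,\ \varepsilon_i+\varepsilon_j:1\le i<j\le r\}\cup\{2\varepsilon_i:1\le i\le r\}\subset\mathbb{R}^r$; a partition of $\mu$ is a finite multiset of positive roots summing to $\mu$, and $K_{C_r}(\mu)$ is their number. A juggling state is a finitely supported integer vector $\langle s_1,s_2,\dots\rangle$ indexed by heights (trailing zeros omitted). A juggling sequence of length $n$ from $\mathbf{a}$ to $\mathbf{b}$ is a sequence $(\mathbf{s}_0,\dots,\mathbf{s}_n)$ with $\mathbf{s}_0=\mathbf{a}$, $\mathbf{s}_n=\mathbf{b}$ such that for each $i$ there are nonnegative integers $c^{(i)}_k$ (finitely many nonzero) with $\sum_k c^{(i)}_k=(\mathbf{s}_{i-1})_1$ and $(\mathbf{s}_i)_k=(\mathbf{s}_{i-1})_{k+1}+c^{(i)}_k$ for all $k\ge1$. $\mathrm{JS}(\mathbf{a},\mathbf{b},n)$ is the set of these and $\mathsf{js}$ its cardinality. *)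

theory Defs
  imports Main "HOL-Library.Multiset"
begin

text \<open>Vectors of R^r (with integer coordinates) are represented as functions
  nat \<Rightarrow> int, coordinates 1..r, zero elsewhere.\<close>

definition unitv :: "nat \<Rightarrow> nat \<Rightarrow> int" where
  "unitv i = (\<lambda>k. if k = i then 1 else 0)"

definition pos_roots_C :: "nat \<Rightarrow> (nat \<Rightarrow> int) set" where
  "pos_roots_C r =
     {(\<lambda>k. unitv i k - unitv j k) | i j. 1 \<le> i \<and> i < j \<and> j \<le> r}
   \<union> {(\<lambda>k. unitv i k + unitv j k) | i j. 1 \<le> i \<and> i < j \<and> j \<le> r}
   \<union> {(\<lambda>k. 2 * unitv i k) | i. 1 \<le> i \<and> i \<le> r}"

definition highest_root_C :: "nat \<Rightarrow> int" where
  "highest_root_C = (\<lambda>k. 2 * unitv 1 k)"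

definition partitions_C :: "nat \<Rightarrow> (nat \<Rightarrow> int) \<Rightarrow> (nat \<Rightarrow> int) multiset set" where
  "partitions_C r mu =
     {M. set_mset M \<subseteq> pos_roots_C r \<and> (\<forall>k. sum_mset (image_mset (\<lambda>v. v k) M) = mu k)}"

definition kostant_C :: "nat \<Rightarrow> (nat \<Rightarrow> int) \<Rightarrow> nat" where
  "kostant_C r mu = card (partitions_C r mu)"

text \<open>Juggling states: functions nat \<Rightarrow> int indexed by heights k \<ge> 1;
  the (meaningless) entry at index 0 is normalised to 0.\<close>
definition js_step :: "(nat \<Rightarrow> int) \<Rightarrow> (nat \<Rightarrow> int) \<Rightarrow> bool" where
  "js_step s t = (\<exists>c :: nat \<Rightarrow> nat. c 0 = 0 \<and> finite {k. c k \<noteq> 0} \<and>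
      (\<Sum>k\<in>{k. c k \<noteq> 0}. int (c k)) = s 1 \<and>
      (\<forall>k\<ge>1. t k = s (k + 1) + int (c k)))"

definition JS :: "(nat \<Rightarrow> int) \<Rightarrow> (nat \<Rightarrow> int) \<Rightarrow> nat \<Rightarrow> (nat \<Rightarrow> int) list set" where
  "JS a b n = {ss. length ss = n + 1 \<and> ss ! 0 = a \<and> ss ! n = b \<and>
      (\<forall>s\<in>set ss. s 0 = 0) \<and>
      (\<forall>i\<in>{1..n}. js_step (ss ! (i - 1)) (ss ! i))}"

definition js :: "(nat \<Rightarrow> int) \<Rightarrow> (nat \<Rightarrow> int) \<Rightarrow> nat \<Rightarrow> nat" where
  "js a b n = card (JS a b n)"

definition state2 :: "nat \<Rightarrow> int" where
  "state2 = (\<lambda>k. if k = 1 then 2 else 0)"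

end

theory Submission
  imports Defs
begin

definition rootA :: "nat \<times> nat \<Rightarrow> nat \<Rightarrow> int" where
  "rootA p = (\<lambda>k. unitv (fst p) k - unitv (snd p) k)"

definition VV :: "nat \<Rightarrow> (nat \<times> nat) set" where
  "VV r = {p. 1 \<le> fst p \<and> fst p < snd p \<and> snd p \<le> r + 1}"

definition FF :: "nat \<Rightarrow> (nat \<times> nat) multiset set" where
  "FF r = {N. set_mset N \<subseteq> VV r \<and>
     (\<forall>k. sum_mset (image_mset (\<lambda>p. rootA p k) N) = 2 * unitv 1 k - 2 * unitv (r+1) k)}"

lemma flow_eq:
  "sum_mset (image_mset (\<lambda>p. rootA p k) N) =
   int (size (filter_mset (\<lambda>p. fst p = k) N)) - int (size (filter_mset (\<lambda>p. snd p = k) N))"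
  by (induction N) (auto simp: rootA_def unitv_def)

definition SS :: "(nat \<times> nat) multiset \<Rightarrow> nat \<Rightarrow> nat \<Rightarrow> int" where
  "SS N i k = (if k = 0 then 0 else
     int (size (filter_mset (\<lambda>p. fst p \<le> i \<and> snd p = i + k) N)) + (if i + k = 1 then 2 else 0))"

definition chi :: "nat \<Rightarrow> (nat \<times> nat) multiset \<Rightarrow> (nat \<Rightarrow> int) list" where
  "chi r N = map (SS N) [0..<r+1]"

lemma size_split_suc:
  "size (filter_mset (\<lambda>p. fst p \<le> Suc j \<and> snd p = m) N) =
   size (filter_mset (\<lambda>p. fst p \<le> j \<and> snd p = m) N) + count N (Suc j, m)"
  by (induction N) auto

lemma size_fst_sum:
  assumes "set_mset N \<subseteq> VV r"
  shows "size (filter_mset (\<lambda>p. fst p = a) N) = (\<Sum>j\<in>{1..r+1}. count N (a, a+j))"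
  using assms
proof (induction N)
  case empty then show ?case by simp
next
  case (add x N)
  then have IH: "size (filter_mset (\<lambda>p. fst p = a) N) = (\<Sum>j\<in>{1..r+1}. count N (a, a+j))" by auto
  from add.prems have xv: "x \<in> VV r" by auto
  have "(\<Sum>j\<in>{1..r+1}. count (add_mset x N) (a, a+j)) =
        (\<Sum>j\<in>{1..r+1}. count N (a, a+j)) + (\<Sum>j\<in>{1..r+1}. if x = (a, a+j) then 1 else 0)"
    by (subst sum.distrib[symmetric]) (intro sum.cong, auto)
  also have "(\<Sum>j\<in>{1..r+1}. if x = (a, a+j) then 1 else 0) = (if fst x = a then 1 else (0::nat))"
  proof (cases "fst x = a")
    case True
    then have "(\<Sum>j\<in>{1..r+1}. if x = (a, a+j) then 1 else (0::nat)) = (\<Sum>j\<in>{1..r+1}. if j = snd x - a then 1 else 0)"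
      using xv by (intro sum.cong) (auto simp: VV_def)
    also have "\<dots> = 1" using xv True by (subst sum.delta) (auto simp: VV_def)
    finally show ?thesis using True by simp
  next
    case False
    then show ?thesis by (auto intro!: sum.neutral)
  qed
  finally show ?case using IH by simp
qed

lemma SS_step:
  assumes "1 \<le> i" "1 \<le> k"
  shows "SS N i k = SS N (i - 1) (k + 1) + int (count N (i, i + k))"
proof -
  obtain j where j: "i = Suc j" using assms by (cases i) auto
  show ?thesis using assms size_split_suc[of j "i + k" N]
    by (simp add: SS_def j)
qed

lemma SS_zero: "SS N i 0 = 0" by (simp add: SS_def)

lemma FF_flow:
  assumes "N \<in> FF r"
  shows "int (size (filter_mset (\<lambda>p. fst p = k) N)) - int (size (filter_mset (\<lambda>p. snd p = k) N))
         = 2 * unitv 1 k - 2 * unitv (r+1) k"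
  using assms flow_eq[of k N] by (simp add: FF_def)

lemma FF_V: "N \<in> FF r \<Longrightarrow> p \<in># N \<Longrightarrow> p \<in> VV r"
  by (auto simp: FF_def)

lemma SS_0: "N \<in> FF r \<Longrightarrow> SS N 0 = state2"
proof
  fix k assume N: "N \<in> FF r"
  have "filter_mset (\<lambda>p. fst p \<le> 0 \<and> snd p = 0 + k) N = {#}"
    using FF_V[OF N] by (force simp: VV_def)
  then show "SS N 0 k = state2 k" unfolding SS_def state2_def by (simp only: ) simp
qed

lemma SS_r: assumes N: "N \<in> FF r" and r: "r \<ge> 1" shows "SS N r = state2"
proof
  fix k
  have f0: "filter_mset (\<lambda>p. fst p = r + 1) N = {#}"
    using FF_V[OF N] by (force simp: VV_def)
  have fl: "int (size (filter_mset (\<lambda>p. snd p = r + 1) N)) = 2"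
    using FF_flow[OF N, of "r+1"] r unfolding f0 by (simp add: unitv_def)
  show "SS N r k = state2 k"
  proof (cases "k = 0 \<or> k = 1")
    case True
    have "filter_mset (\<lambda>p. fst p \<le> r \<and> snd p = r + 1) N = filter_mset (\<lambda>p. snd p = r + 1) N"
      using FF_V[OF N] by (intro filter_mset_cong0) (force simp: VV_def)
    then show ?thesis using True fl r by (auto simp: SS_def state2_def)
  next
    case False
    have "filter_mset (\<lambda>p. fst p \<le> r \<and> snd p = r + k) N = {#}"
      using FF_V[OF N] False by (force simp: VV_def)
    then show ?thesis using False by (simp add: SS_def state2_def)
  qed
qed

lemma SS_step_js:
  assumes N: "N \<in> FF r" and i: "1 \<le> i" "i \<le> r"
  shows "js_step (SS N (i - 1)) (SS N i)"
proof -
  define c where "c = (\<lambda>k. if k = 0 then 0 else count N (i, i + k))"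
  show ?thesis unfolding js_step_def
proof (intro exI[of _ c] conjI allI impI)
  show "c 0 = 0" by (simp add: c_def)
  have sub: "{k. c k \<noteq> 0} \<subseteq> {1..r+1}"
  proof
    fix k assume "k \<in> {k. c k \<noteq> 0}"
    then have "k \<noteq> 0" "(i, i+k) \<in># N" by (auto simp: c_def split: if_splits)
    then show "k \<in> {1..r+1}" using FF_V[OF N] by (force simp: VV_def)
  qed
  show "finite {k. c k \<noteq> 0}" using sub finite_subset by blast
  have "(\<Sum>k\<in>{k. c k \<noteq> 0}. int (c k)) = (\<Sum>k\<in>{1..r+1}. int (c k))"
    using sub by (intro sum.mono_neutral_left) auto
  also have "\<dots> = (\<Sum>k\<in>{1..r+1}. int (count N (i, i + k)))"
    by (intro sum.cong) (auto simp: c_def)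
  also have "\<dots> = int (size (filter_mset (\<lambda>p. fst p = i) N))"
  proof -
    have "set_mset N \<subseteq> VV r" using N by (simp add: FF_def)
    from size_fst_sum[OF this, of i]
    have "int (size (filter_mset (\<lambda>p. fst p = i) N)) = int (\<Sum>k\<in>{1..r+1}. count N (i, i + k))" by simp
    then show ?thesis by (simp only: of_nat_sum)
  qed
  also have "\<dots> = int (size (filter_mset (\<lambda>p. snd p = i) N)) + (if i = 1 then 2 else 0)"
    using FF_flow[OF N, of i] i by (auto simp: unitv_def)
  also have "filter_mset (\<lambda>p. snd p = i) N = filter_mset (\<lambda>p. fst p \<le> i - 1 \<and> snd p = i - 1 + 1) N"
    using FF_V[OF N] i by (intro filter_mset_cong0) (force simp: VV_def)
  finally show "(\<Sum>k\<in>{k. c k \<noteq> 0}. int (c k)) = SS N (i - 1) 1"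
    using i by (simp add: SS_def)
  fix k :: nat assume k: "1 \<le> k"
  show "SS N i k = SS N (i - 1) (k + 1) + int (c k)"
    using SS_step[OF i(1) k, of N] k by (simp add: c_def)
qed
qed

lemma chi_nth: "j \<le> r \<Longrightarrow> chi r N ! j = SS N j"
  by (simp add: chi_def nth_map nth_upt del: upt_Suc)

lemma chi_JS:
  assumes N: "N \<in> FF r" and r: "r \<ge> 1"
  shows "chi r N \<in> JS state2 state2 r"
  unfolding JS_def
proof (intro CollectI conjI ballI)
  show "length (chi r N) = r + 1" by (simp add: chi_def)
  show "chi r N ! 0 = state2" using SS_0[OF N] chi_nth[of 0 r N] by simp
  show "chi r N ! r = state2" using SS_r[OF N r] chi_nth[of r r N] by simp
  show "s 0 = 0" if "s \<in> set (chi r N)" for s using that by (auto simp: chi_def SS_def)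
  show "js_step (chi r N ! (i - 1)) (chi r N ! i)" if "i \<in> {1..r}" for i
  proof -
    have "i - 1 \<le> r" "i \<le> r" using that by auto
    then show ?thesis using SS_step_js[OF N, of i] that chi_nth[of i r N] chi_nth[of "i-1" r N] by simp
  qed
qed

lemma chi_inj: assumes "r \<ge> 1" shows "inj_on (chi r) (FF r)"
proof (rule inj_onI)
  fix N N' assume N: "N \<in> FF r" and N': "N' \<in> FF r" and eq: "chi r N = chi r N'"
  have S: "SS N j = SS N' j" if "j \<le> r" for j
    using eq chi_nth[OF that, of N] chi_nth[OF that, of N'] by simp
  show "N = N'"
  proof (rule multiset_eqI)
    fix x :: "nat \<times> nat"
    show "count N x = count N' x"
    proof (cases "x \<in> VV r")
      case True
      obtain a b where x: "x = (a, b)" by (cases x)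
      define k where "k = b - a"
      have ak: "1 \<le> a" "a \<le> r" "1 \<le> k" "b = a + k" using True by (auto simp: x k_def VV_def)
      have "int (count N (a, a + k)) = SS N a k - SS N (a - 1) (k + 1)"
        using SS_step[OF ak(1) ak(3), of N] by simp
      also have "\<dots> = SS N' a k - SS N' (a - 1) (k + 1)" using S ak by simp
      also have "\<dots> = int (count N' (a, a + k))"
        using SS_step[OF ak(1) ak(3), of N'] by simp
      finally show ?thesis using x ak by simp
    next
      case False
      then have "x \<notin># N" "x \<notin># N'" using FF_V[OF N, of x] FF_V[OF N', of x] by blast+
      then show ?thesis by (simp add: not_in_iff)
    qed
  qed
qed

lemma JS_c:
  assumes "ss \<in> JS a b r" "1 \<le> i" "i \<le> r"
  shows "\<exists>c::nat\<Rightarrow>nat. c 0 = 0 \<and> finite {k. c k \<noteq> 0} \<and>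
      (\<Sum>k\<in>{k. c k \<noteq> 0}. int (c k)) = (ss ! (i - 1)) 1 \<and>
      (\<forall>k\<ge>1. (ss ! i) k = (ss ! (i - 1)) (k + 1) + int (c k))"
proof -
  have "i \<in> {1..r}" using assms by auto
  then have "js_step (ss ! (i - 1)) (ss ! i)" using assms(1) unfolding JS_def by blast
  then show ?thesis unfolding js_step_def by blast
qed

lemma JS_len: "ss \<in> JS a b r \<Longrightarrow> length ss = r + 1" by (simp add: JS_def)

lemma JS_zero: assumes "ss \<in> JS a b r" "i \<le> r" shows "(ss ! i) 0 = 0"
proof -
  have "ss ! i \<in> set ss" using assms JS_len[OF assms(1)] by auto
  then show ?thesis using assms(1) by (auto simp: JS_def)
qed

lemma JS_mono1:
  assumes "ss \<in> JS a b r" "1 \<le> i" "i \<le> r" "1 \<le> k"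
  shows "(ss ! (i - 1)) (k + 1) \<le> (ss ! i) k"
proof -
  obtain c :: "nat \<Rightarrow> nat" where "\<forall>k\<ge>1. (ss ! i) k = (ss ! (i - 1)) (k + 1) + int (c k)"
    using JS_c[OF assms(1-3)] by blast
  then show ?thesis using assms(4) by force
qed

lemma JS_lower:
  assumes "ss \<in> JS a b r" "i \<le> r" "d \<le> i" "1 \<le> k"
  shows "(ss ! (i - d)) (k + d) \<le> (ss ! i) k"
  using assms(3)
proof (induction d)
  case 0 then show ?case by simp
next
  case (Suc d)
  then have "(ss ! (i - d)) (k + d) \<le> (ss ! i) k" by simp
  moreover have "(ss ! (i - d - 1)) (k + d + 1) \<le> (ss ! (i - d)) (k + d)"
    by (rule JS_mono1[OF assms(1)]) (use Suc.prems assms in auto)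
  moreover have "i - Suc d = i - d - 1" "k + Suc d = k + d + 1" by auto
  ultimately show ?case by (simp only:)
qed

lemma JS_nonneg:
  assumes "ss \<in> JS state2 b r" "i \<le> r"
  shows "0 \<le> (ss ! i) k"
proof (cases "k = 0")
  case True then show ?thesis using JS_zero[OF assms] by simp
next
  case False
  then have "(ss ! (i - i)) (k + i) \<le> (ss ! i) k" using JS_lower[OF assms(1,2), of i k] by simp
  moreover have "ss ! 0 = state2" using assms(1) by (simp add: JS_def)
  ultimately show ?thesis by (simp add: state2_def split: if_splits)
qed

lemma JS_vanish:
  assumes ss: "ss \<in> JS state2 state2 r" and a: "1 \<le> a" "a \<le> r" and k: "1 \<le> k" "r + 2 \<le> a + k"
  shows "(ss ! a) k \<le> 0"
proof -
  define k' where "k' = k - (r - a)"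
  have e: "r - (r - a) = a" "k' + (r - a) = k" "k' \<ge> 2" using a k by (auto simp: k'_def)
  have "(ss ! (r - (r - a))) (k' + (r - a)) \<le> (ss ! r) k'"
    using JS_lower[OF ss, of r "r - a" k'] e(3) by simp
  then have "(ss ! a) k \<le> (ss ! r) k'" by (simp only: e)
  moreover have "ss ! r = state2" using ss by (simp add: JS_def)
  moreover have "state2 k' = 0" using e(3) by (simp add: state2_def)
  ultimately show ?thesis by simp
qed

lemma finite_VV: "finite (VV r)"
proof -
  have "VV r \<subseteq> {..r+1} \<times> {..r+1}" by (auto simp: VV_def)
  then show ?thesis using finite_subset by blast
qed

lemma filt_snd:
  assumes "set_mset N \<subseteq> VV r" "1 \<le> k"
  shows "filter_mset (\<lambda>p. snd p = k) N = filter_mset (\<lambda>p. fst p \<le> k - 1 \<and> snd p = k - 1 + 1) N"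
  using assms by (intro filter_mset_cong0) (force simp: VV_def)

lemma filt_fst_empty:
  assumes "set_mset N \<subseteq> VV r" "k = 0 \<or> k > r"
  shows "filter_mset (\<lambda>p. fst p = k) N = {#}"
  using assms by (force simp: VV_def)

lemma filt_snd_empty:
  assumes "set_mset N \<subseteq> VV r" "k = 0 \<or> k > r + 1"
  shows "filter_mset (\<lambda>p. snd p = k) N = {#}"
  using assms by (force simp: VV_def)

lemma chi_surj:
  assumes r: "r \<ge> 1" and ss: "ss \<in> JS state2 state2 r"
  shows "\<exists>N\<in>FF r. chi r N = ss"
proof -
  define dif where "dif i k = (ss ! i) k - (ss ! (i - 1)) (k + 1)" for i k
  define f where "f p = (if p \<in> VV r then nat (dif (fst p) (snd p - fst p)) else 0)" for p
  have fin: "finite {p. f p > 0}"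
    using finite_VV[of r] by (rule finite_subset[rotated]) (auto simp: f_def split: if_splits)
  define N where "N = Abs_multiset f"
  have cN: "count N = f" unfolding N_def using fin by (rule count_Abs_multiset)
  have setN: "set_mset N \<subseteq> VV r"
  proof
    fix p assume "p \<in># N"
    then have "f p \<noteq> 0" using cN by (metis count_eq_zero_iff)
    then show "p \<in> VV r" by (auto simp: f_def split: if_splits)
  qed
  have dif_nn: "0 \<le> dif i k" if "1 \<le> i" "i \<le> r" "1 \<le> k" for i k
    using JS_mono1[OF ss that] by (simp add: dif_def)
  have cnt: "int (count N (i, i + k)) = dif i k" if i: "1 \<le> i" "i \<le> r" and k: "1 \<le> k" for i k
  proof (cases "i + k \<le> r + 1")
    case True
    then have "(i, i + k) \<in> VV r" using i k by (simp add: VV_def)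
    then show ?thesis using cN dif_nn[OF i k] by (simp add: f_def)
  next
    case False
    then have "(i, i + k) \<notin> VV r" by (simp add: VV_def)
    then have "count N (i, i + k) = 0" using cN by (simp add: f_def)
    moreover have "(ss ! i) k \<le> 0" using JS_vanish[OF ss i k] False by simp
    moreover have "0 \<le> (ss ! (i - 1)) (k + 1)" using JS_nonneg[OF ss, of "i - 1"] i by simp
    ultimately show ?thesis using dif_nn[OF i k] by (simp add: dif_def)
  qed
  have states: "ss ! i = SS N i" if "i \<le> r" for i
    using that
  proof (induction i)
    case 0
    have "ss ! 0 = state2" using ss by (simp add: JS_def)
    moreover have "SS N 0 = state2"
    proof
      fix k
      have "filter_mset (\<lambda>p. fst p \<le> 0 \<and> snd p = 0 + k) N = {#}"
        using setN by (force simp: VV_def)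
      then show "SS N 0 k = state2 k" unfolding SS_def state2_def by (simp only: ) simp
    qed
    ultimately show ?case by simp
  next
    case (Suc i)
    then have IH: "ss ! i = SS N i" by simp
    show ?case
    proof
      fix k
      show "(ss ! Suc i) k = SS N (Suc i) k"
      proof (cases "k = 0")
        case True then show ?thesis using JS_zero[OF ss Suc.prems] by (simp add: SS_zero)
      next
        case False
        then have k: "1 \<le> k" by simp
        have "(ss ! Suc i) k = (ss ! i) (k + 1) + dif (Suc i) k" by (simp add: dif_def)
        also have "\<dots> = SS N i (k + 1) + int (count N (Suc i, Suc i + k))"
          using cnt[of "Suc i" k] Suc.prems k IH by simp
        also have "\<dots> = SS N (Suc i) k" using SS_step[of "Suc i" k N] k by simp
        finally show ?thesis .
      qed
    qed
  qed
  have flow: "sum_mset (image_mset (\<lambda>p. rootA p k) N) = 2 * unitv 1 k - 2 * unitv (r+1) k" for k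
  proof -
    consider "k = 0 \<or> k > r + 1" | "1 \<le> k \<and> k \<le> r" | "k = r + 1" by linarith
    then show ?thesis
    proof cases
      case 1
      have e1: "filter_mset (\<lambda>p. fst p = k) N = {#}"
        by (rule filt_fst_empty[OF setN]) (use 1 in auto)
      have e2: "filter_mset (\<lambda>p. snd p = k) N = {#}"
        by (rule filt_snd_empty[OF setN]) (use 1 in auto)
      show ?thesis unfolding flow_eq e1 e2 using 1 r by (auto simp: unitv_def)
    next
      case 2
      then have k: "1 \<le> k" "k \<le> r" by auto
      obtain c :: "nat \<Rightarrow> nat" where c0: "c 0 = 0" and cfin: "finite {j. c j \<noteq> 0}"
        and csum: "(\<Sum>j\<in>{j. c j \<noteq> 0}. int (c j)) = (ss ! (k - 1)) 1"
        and cst: "\<forall>j\<ge>1. (ss ! k) j = (ss ! (k - 1)) (j + 1) + int (c j)"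
        using JS_c[OF ss k] by blast
      have cdif: "int (c j) = int (count N (k, k + j))" if "1 \<le> j" for j
        using cst that cnt[OF k that] by (simp add: dif_def)
      have sub: "{j. c j \<noteq> 0} \<subseteq> {1..r+1}"
      proof
        fix j assume "j \<in> {j. c j \<noteq> 0}"
        then have j1: "c j \<noteq> 0" by simp
        have j2: "j \<noteq> 0"
        proof
          assume "j = 0" then show False using j1 c0 by simp
        qed
        note j = j1 j2
        then have "count N (k, k + j) \<noteq> 0" using cdif[of j] by simp
        then have "(k, k + j) \<in> VV r" using setN by (meson count_inI subsetD)
        then show "j \<in> {1..r+1}" using j by (simp add: VV_def)
      qed
      have "int (size (filter_mset (\<lambda>p. fst p = k) N)) = int (\<Sum>j\<in>{1..r+1}. count N (k, k + j))"
        using size_fst_sum[OF setN, of k] by simp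
      also have "\<dots> = (\<Sum>j\<in>{1..r+1}. int (count N (k, k + j)))" by (simp only: of_nat_sum)
      also have "\<dots> = (\<Sum>j\<in>{1..r+1}. int (c j))" using cdif by (intro sum.cong) auto
      also have "\<dots> = (\<Sum>j\<in>{j. c j \<noteq> 0}. int (c j))"
        using sub by (intro sum.mono_neutral_right) auto
      also have "\<dots> = SS N (k - 1) 1" using csum states[of "k - 1"] k by simp
      also have "\<dots> = int (size (filter_mset (\<lambda>p. snd p = k) N)) + (if k = 1 then 2 else 0)"
        using filt_snd[OF setN k(1)] k by (simp add: SS_def)
      finally show ?thesis unfolding flow_eq using k by (simp add: unitv_def)
    next
      case 3
      have "SS N r 1 = 2" using states[of r] ss by (simp add: JS_def state2_def)
      then have "int (size (filter_mset (\<lambda>p. fst p \<le> r + 1 - 1 \<and> snd p = r + 1 - 1 + 1) N)) = 2"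
        using r by (simp add: SS_def)
      then have "int (size (filter_mset (\<lambda>p. snd p = r + 1) N)) = 2"
        using filt_snd[OF setN, of "r+1"] by simp
      then show ?thesis unfolding flow_eq using 3 filt_fst_empty[OF setN, of "r+1"] r
        by (simp add: unitv_def)
    qed
  qed
  have "N \<in> FF r" using setN flow by (simp add: FF_def)
  moreover have "chi r N = ss"
  proof (rule nth_equalityI)
    show "length (chi r N) = length ss" using JS_len[OF ss] by (simp add: chi_def)
    fix i assume "i < length (chi r N)"
    then have "i \<le> r" by (simp add: chi_def)
    then show "chi r N ! i = ss ! i" using chi_nth states by simp
  qed
  ultimately show ?thesis by blast
qed

definition upr :: "nat \<Rightarrow> (nat \<times> nat) multiset \<Rightarrow> nat \<Rightarrow> int" where
  "upr r N = (\<lambda>k. sum_mset (image_mset (\<lambda>p. unitv (fst p) k) (filter_mset (\<lambda>p. snd p = r + 1) N)))"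

definition psi :: "nat \<Rightarrow> (nat \<times> nat) multiset \<Rightarrow> (nat \<Rightarrow> int) multiset" where
  "psi r N = image_mset rootA (filter_mset (\<lambda>p. snd p \<noteq> r + 1) N) + {# upr r N #}"

lemma sum_img_comp: "sum_mset (image_mset (\<lambda>v. v k) (image_mset rootA A)) = sum_mset (image_mset (\<lambda>p. rootA p k) A)"
  by (induction A) auto

lemma N1_two:
  assumes N: "N \<in> FF r" and r: "r \<ge> 1"
  obtains x y where "filter_mset (\<lambda>p. snd p = r + 1) N = {#x, y#}"
    "x \<in> VV r" "y \<in> VV r" "snd x = r + 1" "snd y = r + 1"
proof -
  have setN: "set_mset N \<subseteq> VV r" using N by (simp add: FF_def)
  have e: "filter_mset (\<lambda>p. fst p = r + 1) N = {#}"
    by (rule filt_fst_empty[OF setN]) simp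
  have "int (size (filter_mset (\<lambda>p. snd p = r + 1) N)) = 2"
    using FF_flow[OF N, of "r+1"] r unfolding e by (simp add: unitv_def)
  then have "size (filter_mset (\<lambda>p. snd p = r + 1) N) = Suc (Suc 0)" by simp
  then obtain x B where B: "filter_mset (\<lambda>p. snd p = r + 1) N = add_mset x B" "size B = Suc 0"
    by (metis size_eq_Suc_imp_eq_union size_add_mset Suc_inject)
  have "\<exists>y. B = {#y#}" using size_1_singleton_mset[of B] B(2) by simp
  then obtain y where "B = {#y#}" by blast
  then have E: "filter_mset (\<lambda>p. snd p = r + 1) N = {#x, y#}" using B by simp
  have "x \<in># filter_mset (\<lambda>p. snd p = r + 1) N" "y \<in># filter_mset (\<lambda>p. snd p = r + 1) N"
    unfolding E by auto
  then show ?thesis using that[OF E] setN by auto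
qed

lemma upr_eq:
  assumes "filter_mset (\<lambda>p. snd p = r + 1) N = {#x, y#}"
  shows "upr r N = (\<lambda>k. unitv (fst x) k + unitv (fst y) k)"
  unfolding upr_def assms by (simp add: fun_eq_iff)

lemma psi_in:
  assumes N: "N \<in> FF r" and r: "r \<ge> 1"
  shows "psi r N \<in> partitions_C r highest_root_C"
proof -
  have setN: "set_mset N \<subseteq> VV r" using N by (simp add: FF_def)
  obtain x y where E: "filter_mset (\<lambda>p. snd p = r + 1) N = {#x, y#}"
    and xy: "x \<in> VV r" "y \<in> VV r" "snd x = r + 1" "snd y = r + 1"
    using N1_two[OF N r] by blast
  have U: "upr r N = (\<lambda>k. unitv (fst x) k + unitv (fst y) k)" using upr_eq[OF E] .
  have fx: "1 \<le> fst x" "fst x \<le> r" "1 \<le> fst y" "fst y \<le> r" using xy by (auto simp: VV_def)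
  have upin: "upr r N \<in> pos_roots_C r"
  proof -
    consider "fst x < fst y" | "fst y < fst x" | "fst x = fst y" by linarith
    then show ?thesis
    proof cases
      case 1 then show ?thesis unfolding U pos_roots_C_def using fx by blast
    next
      case 2
      have "(\<lambda>k. unitv (fst x) k + unitv (fst y) k) = (\<lambda>k. unitv (fst y) k + unitv (fst x) k)"
        by (simp add: add.commute)
      then show ?thesis unfolding U pos_roots_C_def using fx 2 by blast
    next
      case 3
      have "(\<lambda>k. unitv (fst x) k + unitv (fst y) k) = (\<lambda>k. 2 * unitv (fst x) k)"
        using 3 by (simp add: fun_eq_iff)
      then show ?thesis unfolding U pos_roots_C_def using fx by blast
    qed
  qed
  have A: "rootA p \<in> pos_roots_C r" if "p \<in># filter_mset (\<lambda>p. snd p \<noteq> r + 1) N" for p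
  proof -
    have "p \<in> VV r" "snd p \<noteq> r + 1" using that setN by auto
    then have "1 \<le> fst p \<and> fst p < snd p \<and> snd p \<le> r" by (auto simp: VV_def)
    then show ?thesis unfolding pos_roots_C_def rootA_def by blast
  qed
  have sum: "sum_mset (image_mset (\<lambda>v. v k) (psi r N)) = highest_root_C k" for k
  proof -
    have split: "N = filter_mset (\<lambda>p. snd p \<noteq> r + 1) N + filter_mset (\<lambda>p. snd p = r + 1) N"
      using multiset_partition[of N "\<lambda>p. snd p \<noteq> r + 1"] by simp
    have "sum_mset (image_mset (\<lambda>p. rootA p k) N) =
          sum_mset (image_mset (\<lambda>p. rootA p k) (filter_mset (\<lambda>p. snd p \<noteq> r + 1) N))
          + (rootA x k + rootA y k)"
    proof -
      have "sum_mset (image_mset (\<lambda>p. rootA p k) N) = sum_mset (image_mset (\<lambda>p. rootA p k)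
         (filter_mset (\<lambda>p. snd p \<noteq> r + 1) N + filter_mset (\<lambda>p. snd p = r + 1) N))"
        by (simp only: split[symmetric])
      then show ?thesis by (simp only: image_mset_union sum_mset.union E) simp
    qed
    then have "sum_mset (image_mset (\<lambda>p. rootA p k) (filter_mset (\<lambda>p. snd p \<noteq> r + 1) N))
         = 2 * unitv 1 k - 2 * unitv (r+1) k - (rootA x k + rootA y k)"
      using N by (simp add: FF_def)
    then show ?thesis unfolding psi_def using xy
      by (simp add: sum_img_comp U rootA_def highest_root_C_def)
  qed
  show ?thesis unfolding partitions_C_def psi_def
    using A upin sum unfolding psi_def by auto
qed

definition negv :: "(nat \<Rightarrow> int) \<Rightarrow> bool" where
  "negv v = (\<exists>k. v k < 0)"

lemma negv_rootA: "p \<in> VV r \<Longrightarrow> negv (rootA p)"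
  unfolding negv_def rootA_def VV_def unitv_def by (rule exI[of _ "snd p"]) auto

lemma not_negv_up: "\<not> negv (\<lambda>k. unitv i k + unitv j k)"
  unfolding negv_def unitv_def by auto

lemma inj_rootA: "inj_on rootA (VV r)"
proof (rule inj_onI)
  fix p q assume p: "p \<in> VV r" and q: "q \<in> VV r" and e: "rootA p = rootA q"
  have "rootA p (fst p) = 1" using p by (simp add: rootA_def unitv_def VV_def)
  then have "rootA q (fst p) = 1" using e by simp
  then have 1: "fst q = fst p" by (simp add: rootA_def unitv_def split: if_splits)
  have "rootA p (snd p) = -1" using p by (simp add: rootA_def unitv_def VV_def)
  then have "rootA q (snd p) = -1" using e by simp
  then have 2: "snd q = snd p" by (simp add: rootA_def unitv_def split: if_splits)
  show "p = q" using 1 2 by (simp add: prod_eq_iff)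
qed

lemma count_fst: "int (count (image_mset fst M) k) = sum_mset (image_mset (\<lambda>p. unitv (fst p) k) M)"
  by (induction M) (auto simp: unitv_def)

lemma psi_parts:
  assumes N: "N \<in> FF r" and r: "r \<ge> 1"
  shows "filter_mset negv (psi r N) = image_mset rootA (filter_mset (\<lambda>p. snd p \<noteq> r + 1) N)"
    "filter_mset (\<lambda>v. \<not> negv v) (psi r N) = {# upr r N #}"
proof -
  have setN: "set_mset N \<subseteq> VV r" using N by (simp add: FF_def)
  obtain x y where E: "filter_mset (\<lambda>p. snd p = r + 1) N = {#x, y#}"
    using N1_two[OF N r] by blast
  have U: "\<not> negv (upr r N)" unfolding upr_eq[OF E] by (rule not_negv_up)
  have A: "filter_mset negv (image_mset rootA (filter_mset (\<lambda>p. snd p \<noteq> r + 1) N))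
      = image_mset rootA (filter_mset (\<lambda>p. snd p \<noteq> r + 1) N)"
    unfolding filter_mset_image_mset
    by (rule arg_cong[where f="image_mset rootA"], rule filter_mset_cong0[THEN trans[OF _ filter_mset_True]])
       (use setN negv_rootA in auto)
  have B: "filter_mset (\<lambda>v. \<not> negv v) (image_mset rootA (filter_mset (\<lambda>p. snd p \<noteq> r + 1) N)) = {#}"
    using setN negv_rootA by fastforce
  show "filter_mset negv (psi r N) = image_mset rootA (filter_mset (\<lambda>p. snd p \<noteq> r + 1) N)"
    unfolding psi_def filter_union_mset A using U by simp
  show "filter_mset (\<lambda>v. \<not> negv v) (psi r N) = {# upr r N #}"
    unfolding psi_def filter_union_mset B using U by simp
qed

lemma psi_inj: assumes r: "r \<ge> 1" shows "inj_on (psi r) (FF r)"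
proof (rule inj_onI)
  fix N N' assume N: "N \<in> FF r" and N': "N' \<in> FF r" and e: "psi r N = psi r N'"
  have setN: "set_mset N \<subseteq> VV r" using N by (simp add: FF_def)
  have setN': "set_mset N' \<subseteq> VV r" using N' by (simp add: FF_def)
  define A where "A = filter_mset (\<lambda>p. snd p \<noteq> r + 1) N"
  define A' where "A' = filter_mset (\<lambda>p. snd p \<noteq> r + 1) N'"
  define B where "B = filter_mset (\<lambda>p. snd p = r + 1) N"
  define B' where "B' = filter_mset (\<lambda>p. snd p = r + 1) N'"
  have "image_mset rootA A = image_mset rootA A'"
    using psi_parts(1)[OF N r] psi_parts(1)[OF N' r] e by (simp add: A_def A'_def)
  then have "image_mset (inv_into (VV r) rootA) (image_mset rootA A)
           = image_mset (inv_into (VV r) rootA) (image_mset rootA A')" by simp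
  moreover have "image_mset (inv_into (VV r) rootA) (image_mset rootA X) = X" if "set_mset X \<subseteq> VV r" for X
  proof -
    have "image_mset (inv_into (VV r) rootA) (image_mset rootA X) = image_mset (\<lambda>x. x) X"
      unfolding multiset.map_comp o_def
      by (rule image_mset_cong) (use that inv_into_f_f[OF inj_rootA] in auto)
    then show ?thesis by simp
  qed
  moreover have "set_mset A \<subseteq> VV r" "set_mset A' \<subseteq> VV r" using setN setN' by (auto simp: A_def A'_def)
  ultimately have AA: "A = A'" by simp
  have "{# upr r N #} = {# upr r N' #}"
    using psi_parts(2)[OF N r] psi_parts(2)[OF N' r] e by simp
  then have "upr r N = upr r N'" by simp
  then have "int (count (image_mset fst B) k) = int (count (image_mset fst B') k)" for k
    unfolding count_fst B_def B'_def by (simp add: upr_def fun_eq_iff)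
  then have F: "image_mset fst B = image_mset fst B'" by (simp add: multiset_eq_iff)
  have rec: "X = image_mset (\<lambda>a. (a, r + 1)) (image_mset fst X)" if "\<forall>p\<in>#X. snd p = r + 1" for X
  proof -
    have "image_mset (\<lambda>a. (a, r + 1)) (image_mset fst X) = image_mset (\<lambda>x. x) X"
      unfolding multiset.map_comp o_def by (rule image_mset_cong) (use that in auto)
    then show ?thesis by simp
  qed
  have BB: "B = B'"
    using rec[of B] rec[of B'] F by (simp add: B_def B'_def)
  have "N = A + B" "N' = A' + B'"
    using multiset_partition[of N "\<lambda>p. snd p \<noteq> r + 1"] multiset_partition[of N' "\<lambda>p. snd p \<noteq> r + 1"]
    by (simp_all add: A_def A'_def B_def B'_def)
  then show "N = N'" using AA BB by simp
qed



lemma mset_preimage: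
  assumes "set_mset M \<subseteq> f ` A"
  shows "\<exists>N. set_mset N \<subseteq> A \<and> image_mset f N = M"
  using assms
proof (induction M)
  case empty then show ?case by (intro exI[of _ "{#}"]) simp
next
  case (add x M)
  then obtain N where N: "set_mset N \<subseteq> A" "image_mset f N = M" by auto
  obtain a where a: "a \<in> A" "x = f a" using add.prems by auto
  show ?case using N a by (intro exI[of _ "add_mset a N"]) simp
qed

lemma pos_cases:
  assumes "v \<in> pos_roots_C r"
  shows "(\<exists>i j. 1 \<le> i \<and> i < j \<and> j \<le> r \<and> v = rootA (i, j)) \<or>
         (\<exists>i j. 1 \<le> i \<and> i \<le> r \<and> 1 \<le> j \<and> j \<le> r \<and> v = (\<lambda>k. unitv i k + unitv j k))"
proof -
  have 3: "(\<lambda>k. 2 * unitv i k) = (\<lambda>k. unitv i k + unitv i k)" for i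
    by (simp add: fun_eq_iff)
  from assms consider
    (a) i j where "1 \<le> i" "i < j" "j \<le> r" "v = (\<lambda>k. unitv i k - unitv j k)"
  | (b) i j where "1 \<le> i" "i < j" "j \<le> r" "v = (\<lambda>k. unitv i k + unitv j k)"
  | (c) i where "1 \<le> i" "i \<le> r" "v = (\<lambda>k. 2 * unitv i k)"
    unfolding pos_roots_C_def by blast
  then show ?thesis
  proof cases
    case a then show ?thesis unfolding rootA_def by (intro disjI1) auto
  next
    case b then show ?thesis by (intro disjI2 exI[of _ i] exI[of _ j]) auto
  next
    case c then show ?thesis unfolding 3 by (intro disjI2 exI[of _ i] exI[of _ i]) auto
  qed
qed

definition sig :: "nat \<Rightarrow> (nat \<Rightarrow> int) \<Rightarrow> int" where
  "sig r v = (\<Sum>k\<in>{1..r}. v k)"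

lemma sig_unitv: "1 \<le> i \<Longrightarrow> i \<le> r \<Longrightarrow> (\<Sum>k\<in>{1..r}. unitv i k) = 1"
  unfolding unitv_def by (simp add: sum.delta)

lemma sig_pos:
  assumes "v \<in> pos_roots_C r"
  shows "sig r v = (if negv v then 0 else 2)"
  using pos_cases[OF assms]
proof
  assume "\<exists>i j. 1 \<le> i \<and> i < j \<and> j \<le> r \<and> v = rootA (i, j)"
  then obtain i j where ij: "1 \<le> i" "i < j" "j \<le> r" "v = rootA (i, j)" by blast
  have "negv v" using ij negv_rootA[of "(i,j)" r] by (simp add: VV_def)
  moreover have "sig r v = 0" using ij sig_unitv[of i r] sig_unitv[of j r]
    by (simp add: sig_def rootA_def sum_subtractf)
  ultimately show ?thesis by simp
next
  assume "\<exists>i j. 1 \<le> i \<and> i \<le> r \<and> 1 \<le> j \<and> j \<le> r \<and> v = (\<lambda>k. unitv i k + unitv j k)"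
  then obtain i j where ij: "1 \<le> i" "i \<le> r" "1 \<le> j" "j \<le> r" "v = (\<lambda>k. unitv i k + unitv j k)" by blast
  have "\<not> negv v" using ij not_negv_up by simp
  moreover have "sig r v = 2" using ij sig_unitv[of i r] sig_unitv[of j r]
    by (simp add: sig_def sum.distrib)
  ultimately show ?thesis by simp
qed

lemma sum_swap_mset:
  "sum_mset (image_mset (\<lambda>v. \<Sum>k\<in>A. v k) M) = (\<Sum>k\<in>A. sum_mset (image_mset (\<lambda>v. v k) M))"
  by (induction M) (auto simp: sum.distrib)

lemma sig_count:
  assumes "set_mset M \<subseteq> pos_roots_C r"
  shows "sum_mset (image_mset (sig r) M) = 2 * int (size (filter_mset (\<lambda>v. \<not> negv v) M))"
  using assms by (induction M) (auto simp: sig_pos)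

lemma psi_surj:
  assumes r: "r \<ge> 1" and M: "M \<in> partitions_C r highest_root_C"
  shows "\<exists>N\<in>FF r. psi r N = M"
proof -
  have setM: "set_mset M \<subseteq> pos_roots_C r" and sumM: "\<And>k. sum_mset (image_mset (\<lambda>v. v k) M) = 2 * unitv 1 k"
    using M by (auto simp: partitions_C_def highest_root_C_def)
  have "sum_mset (image_mset (sig r) M) = (\<Sum>k\<in>{1..r}. 2 * unitv 1 k)"
    unfolding sig_def sum_swap_mset sumM ..
  also have "\<dots> = 2" using sig_unitv[of 1 r] r by (simp add: sum_distrib_left[symmetric])
  finally have "size (filter_mset (\<lambda>v. \<not> negv v) M) = 1" using sig_count[OF setM] by simp
  then obtain u where U: "filter_mset (\<lambda>v. \<not> negv v) M = {#u#}" using size_1_singleton_mset by blast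
  have "u \<in># filter_mset (\<lambda>v. \<not> negv v) M" unfolding U by simp
  then have uM: "u \<in> pos_roots_C r" "\<not> negv u" using setM by auto
  then obtain i j where ij: "1 \<le> i" "i \<le> r" "1 \<le> j" "j \<le> r" and uij: "u = (\<lambda>k. unitv i k + unitv j k)"
    using pos_cases[OF uM(1)] negv_rootA[of _ r] by (auto simp: VV_def)
  define M0 where "M0 = filter_mset negv M"
  have "set_mset M0 \<subseteq> rootA ` {p \<in> VV r. snd p \<le> r}"
  proof
    fix v assume "v \<in> set_mset M0"
    then have v: "v \<in> pos_roots_C r" "negv v" using setM by (auto simp: M0_def)
    then obtain a b where "1 \<le> a" "a < b" "b \<le> r" "v = rootA (a, b)"
      using pos_cases[OF v(1)] not_negv_up by blast
    then show "v \<in> rootA ` {p \<in> VV r. snd p \<le> r}" by (auto simp: VV_def)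
  qed
  then obtain N0 where N0: "set_mset N0 \<subseteq> {p \<in> VV r. snd p \<le> r}" "image_mset rootA N0 = M0"
    using mset_preimage by blast
  define N where "N = N0 + {#(i, r + 1), (j, r + 1)#}"
  have Msplit: "M = M0 + {#u#}" using multiset_partition[of M negv] U by (simp add: M0_def)
  have setN: "set_mset N \<subseteq> VV r" using N0 ij by (auto simp: N_def VV_def)
  have flow: "sum_mset (image_mset (\<lambda>p. rootA p k) N) = 2 * unitv 1 k - 2 * unitv (r+1) k" for k
  proof -
    have "sum_mset (image_mset (\<lambda>p. rootA p k) N0) = sum_mset (image_mset (\<lambda>v. v k) M0)"
      using sum_img_comp[of k N0] N0(2) by simp
    also have "\<dots> = 2 * unitv 1 k - u k" using sumM[of k] Msplit by simp
    finally show ?thesis by (simp add: N_def uij rootA_def)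
  qed
  have NF: "N \<in> FF r" using setN flow by (simp add: FF_def)
  have f1: "filter_mset (\<lambda>p. snd p \<noteq> r + 1) N = N0"
  proof -
    have "filter_mset (\<lambda>p. snd p \<noteq> r + 1) N0 = N0"
      by (rule filter_mset_cong0[THEN trans[OF _ filter_mset_True]]) (use N0(1) in auto)
    then show ?thesis by (simp add: N_def)
  qed
  have f2: "filter_mset (\<lambda>p. snd p = r + 1) N = {#(i, r + 1), (j, r + 1)#}"
  proof -
    have "filter_mset (\<lambda>p. snd p = r + 1) N0 = {#}" using N0(1) by force
    then show ?thesis by (simp add: N_def)
  qed
  have "psi r N = M"
    unfolding psi_def f1 upr_eq[OF f2] using Msplit N0(2) uij by simp
  then show ?thesis using NF by blast
qed

theorem mainTheorem12:
  fixes r :: nat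
  assumes "r \<ge> 3"
  shows "(\<exists>f. bij_betw f (partitions_C r highest_root_C) (JS state2 state2 r))
         \<and> kostant_C r highest_root_C = js state2 state2 r"
proof -
  have r: "r \<ge> 1" using assms by simp
  have b1: "bij_betw (psi r) (FF r) (partitions_C r highest_root_C)"
    unfolding bij_betw_def
    using psi_inj[OF r] psi_in[OF _ r] psi_surj[OF r] by blast
  have b2: "bij_betw (chi r) (FF r) (JS state2 state2 r)"
    unfolding bij_betw_def
    using chi_inj[OF r] chi_JS[OF _ r] chi_surj[OF r] by blast
  have b: "bij_betw (chi r \<circ> inv_into (FF r) (psi r)) (partitions_C r highest_root_C) (JS state2 state2 r)"
    by (rule bij_betw_trans[OF bij_betw_inv_into[OF b1] b2])
  then have "card (partitions_C r highest_root_C) = card (JS state2 state2 r)"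
    by (rule bij_betw_same_card)
  then show ?thesis using b unfolding kostant_C_def js_def by blast
qed

end
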